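(* For the modified EnvZ/OmpR network described in the context and any positive rate constants $k_1,\dots,k_{16}$, at every positive steady state \[[\mathrm{OmpR\text{-}P}]<\frac{k_1}{k_2}\cdot\frac{k_3k_5}{k_4+k_5}\cdot\frac{k_{14}+k_{15}}{k_{13}k_{15}}\quad\text{and}\quad[\mathrm{OmpR\text{-}P}]<k_5\,\frac{k_{11}+k_{12}}{k_{10}k_{12}}.\]
   Context: The modified EnvZ/OmpR network has mass-action kinetics and reactions $\mathrm{EnvZ\text{-}ADP}\underset{k_2}{\overset{k_1}{\rightleftharpoons}}\mathrm{EnvZ}\underset{k_4}{\overset{k_3}{\rightleftharpoons}}\mathrm{EnvZ\text{-}ATP}\xrightarrow{k_5}\mathrm{EnvZ\text{-}P}$; $\mathrm{EnvZ\text{-}P}+\mathrm{OmpR}\underset{k_7}{\overset{k_6}{\rightleftharpoons}}\mathrm{EnvZ\text{-}P\text{-}OmpR}\underset{k_9}{\overset{k_8}{\rightleftharpoons}}\mathrm{EnvZ}+\mathrm{OmpR\text{-}P}$; $\mathrm{EnvZ\text{-}ATP}+\mathrm{OmpR\text{-}P}\underset{k_{11}}{\overset{k_{10}}{\rightleftharpoons}}\mathrm{EnvZ\text{-}ATP\text{-}OmpR\text{-}P}\xrightarrow{k_{12}}\mathrm{EnvZ\text{-}ATP}+\mathrm{OmpR}$; $\mathrm{EnvZ\text{-}ADP}+\mathrm{OmpR\text{-}P}\underset{k_{14}}{\overset{k_{13}}{\rightleftharpoons}}\mathrm{EnvZ\text{-}ADP\text{-}OmpR\text{-}P}\xrightarrow{k_{15}}\mathrm{EnvZ\text{-}ADP}+\mathrm{OmpR}$;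 $\mathrm{OmpR\text{-}P}\xrightarrow{k_{16}}\mathrm{OmpR}$ (here $A\underset{k'}{\overset{k}{\rightleftharpoons}}B$ means $A\xrightarrow{k}B$ and $B\xrightarrow{k'}A$; hyphenated names are single species). Square brackets denote concentrations; a positive steady state is a vector of positive concentrations of all nine species at which all mass-action rates of change vanish. *)

theory Defs
  imports Complex_Main
begin

text \<open>Species concentrations (in this order):
  xD = [EnvZ-ADP], xE = [EnvZ], xT = [EnvZ-ATP], xP = [EnvZ-P], xO = [OmpR],
  xC1 = [EnvZ-P-OmpR], xOp = [OmpR-P], xC2 = [EnvZ-ATP-OmpR-P], xC3 = [EnvZ-ADP-OmpR-P].\<close>

definition envz_steady ::
  "(nat \<Rightarrow> real) \<Rightarrow> real \<Rightarrow> real \<Rightarrow> real \<Rightarrow> real \<Rightarrow> real \<Rightarrow> real \<Rightarrow> real \<Rightarrow> real \<Rightarrow> real \<Rightarrow> bool"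
where
  "envz_steady k xD xE xT xP xO xC1 xOp xC2 xC3 \<longleftrightarrow>
     (- k 1 * xD + k 2 * xE - k 13 * xD * xOp + k 14 * xC3 + k 15 * xC3 = 0) \<and>
     (k 1 * xD - k 2 * xE - k 3 * xE + k 4 * xT + k 8 * xC1 - k 9 * xE * xOp = 0) \<and>
     (k 3 * xE - k 4 * xT - k 5 * xT - k 10 * xT * xOp + k 11 * xC2 + k 12 * xC2 = 0) \<and>
     (k 5 * xT - k 6 * xP * xO + k 7 * xC1 = 0) \<and>
     (- k 6 * xP * xO + k 7 * xC1 + k 12 * xC2 + k 15 * xC3 + k 16 * xOp = 0) \<and>
     (k 6 * xP * xO - k 7 * xC1 - k 8 * xC1 + k 9 * xE * xOp = 0) \<and>
     (k 8 * xC1 - k 9 * xE * xOp - k 10 * xT * xOp + k 11 * xC2 - k 13 * xD * xOp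
        + k 14 * xC3 - k 16 * xOp = 0) \<and>
     (k 10 * xT * xOp - k 11 * xC2 - k 12 * xC2 = 0) \<and>
     (k 13 * xD * xOp - k 14 * xC3 - k 15 * xC3 = 0)"

end

theory Submission
  imports Defs
begin

theorem mainTheorem9:
  fixes k :: "nat \<Rightarrow> real"
    and xD xE xT xP xO xC1 xOp xC2 xC3 :: real
  assumes "\<forall>i\<in>{1..16}. k i > 0"
    and "xD > 0" "xE > 0" "xT > 0" "xP > 0" "xO > 0"
    and "xC1 > 0" "xOp > 0" "xC2 > 0" "xC3 > 0"
    and "envz_steady k xD xE xT xP xO xC1 xOp xC2 xC3"
  shows "xOp < (k 1 / k 2) * (k 3 * k 5 / (k 4 + k 5)) * ((k 14 + k 15) / (k 13 * k 15))
       \<and> xOp < k 5 * ((k 11 + k 12) / (k 10 * k 12))"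
proof -
  have kp: "\<And>i. 1 \<le> i \<Longrightarrow> i \<le> 16 \<Longrightarrow> k i > 0" using assms(1) by auto
  have k1: "k 1 > 0" and k2: "k 2 > 0" and k3: "k 3 > 0" and k4: "k 4 > 0" and k5: "k 5 > 0"
    and k10: "k 10 > 0" and k11: "k 11 > 0" and k12: "k 12 > 0" and k13: "k 13 > 0"
    and k14: "k 14 > 0" and k15: "k 15 > 0" and k16: "k 16 > 0" by (auto intro: kp)
  note st = assms(11)[unfolded envz_steady_def]
  have e9: "(k 14 + k 15) * xC3 = k 13 * xD * xOp" using st by (simp add: algebra_simps)
  have e8: "(k 11 + k 12) * xC2 = k 10 * xT * xOp" using st by (simp add: algebra_simps)
  have e1: "k 1 * xD = k 2 * xE" using st e9 by (simp add: algebra_simps)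
  have e3: "k 3 * xE = (k 4 + k 5) * xT" using st e8 by (simp add: algebra_simps)
  have flux: "k 5 * xT = k 12 * xC2 + k 15 * xC3 + k 16 * xOp" using st by linarith
  have p16: "k 16 * xOp > 0" using k16 \<open>xOp > 0\<close> by simp
  have p15: "k 15 * xC3 > 0" using k15 \<open>xC3 > 0\<close> by simp
  have p12: "k 12 * xC2 > 0" using k12 \<open>xC2 > 0\<close> by simp
  have i2: "k 12 * xC2 < k 5 * xT" using flux p16 p15 by linarith
  have i1: "k 15 * xC3 < k 5 * xT" using flux p16 p12 by linarith
  have s11: "k 11 + k 12 > 0" using k11 k12 by simp
  have s14: "k 14 + k 15 > 0" using k14 k15 by simp
  have s4: "k 4 + k 5 > 0" using k4 k5 by simp
  have L1: "(k 11 + k 12) * (k 12 * xC2) < (k 11 + k 12) * (k 5 * xT)"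
    using i2 s11 by simp
  have R1: "(k 11 + k 12) * (k 12 * xC2) = xT * (k 10 * k 12 * xOp)"
  proof -
    have "(k 11 + k 12) * (k 12 * xC2) = k 12 * ((k 11 + k 12) * xC2)" by (simp only: mult_ac)
    also have "\<dots> = k 12 * (k 10 * xT * xOp)" by (simp only: e8)
    also have "\<dots> = xT * (k 10 * k 12 * xOp)" by (simp only: mult_ac)
    finally show ?thesis .
  qed
  have R2: "(k 11 + k 12) * (k 5 * xT) = xT * (k 5 * (k 11 + k 12))" by (simp only: mult_ac)
  have "xT * (k 10 * k 12 * xOp) < xT * (k 5 * (k 11 + k 12))"
    using L1 unfolding R1 R2 .
  hence "k 10 * k 12 * xOp < k 5 * (k 11 + k 12)" using \<open>xT > 0\<close> by simp
  hence A: "xOp < k 5 * ((k 11 + k 12) / (k 10 * k 12))"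
    using k10 k12 by (simp add: field_simps)
  have L2: "(k 14 + k 15) * (k 15 * xC3) < (k 14 + k 15) * (k 5 * xT)"
    using i1 s14 by simp
  have R3: "(k 14 + k 15) * (k 15 * xC3) = k 15 * (k 13 * xD * xOp)"
  proof -
    have "(k 14 + k 15) * (k 15 * xC3) = k 15 * ((k 14 + k 15) * xC3)" by (simp only: mult_ac)
    also have "\<dots> = k 15 * (k 13 * xD * xOp)" by (simp only: e9)
    finally show ?thesis .
  qed
  have B1: "k 15 * (k 13 * xD * xOp) < (k 14 + k 15) * (k 5 * xT)"
    using L2 unfolding R3 .
  have xT: "k 2 * (k 4 + k 5) * xT = k 1 * k 3 * xD"
  proof -
    have "k 2 * (k 4 + k 5) * xT = k 2 * ((k 4 + k 5) * xT)" by (simp only: mult_ac)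
    also have "\<dots> = k 2 * (k 3 * xE)" by (simp only: e3)
    also have "\<dots> = k 3 * (k 2 * xE)" by (simp only: mult_ac)
    also have "\<dots> = k 3 * (k 1 * xD)" by (simp only: e1)
    also have "\<dots> = k 1 * k 3 * xD" by (simp only: mult_ac)
    finally show ?thesis .
  qed
  have pos: "k 2 * (k 4 + k 5) > 0" using k2 s4 by simp
  have C: "k 15 * (k 13 * xD * xOp) * (k 2 * (k 4 + k 5)) < (k 14 + k 15) * (k 5 * xT) * (k 2 * (k 4 + k 5))"
    using mult_strict_right_mono[OF B1 pos] .
  have R4: "k 15 * (k 13 * xD * xOp) * (k 2 * (k 4 + k 5)) = xD * (k 15 * k 13 * xOp * (k 2 * (k 4 + k 5)))"
    by (simp only: mult_ac)
  have R5: "(k 14 + k 15) * (k 5 * xT) * (k 2 * (k 4 + k 5)) = xD * ((k 14 + k 15) * k 5 * k 1 * k 3)"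
  proof -
    have "(k 14 + k 15) * (k 5 * xT) * (k 2 * (k 4 + k 5)) = (k 14 + k 15) * k 5 * (k 2 * (k 4 + k 5) * xT)"
      by (simp only: mult_ac)
    also have "\<dots> = (k 14 + k 15) * k 5 * (k 1 * k 3 * xD)" by (simp only: xT)
    also have "\<dots> = xD * ((k 14 + k 15) * k 5 * k 1 * k 3)" by (simp only: mult_ac)
    finally show ?thesis .
  qed
  have "xD * (k 15 * k 13 * xOp * (k 2 * (k 4 + k 5))) < xD * ((k 14 + k 15) * k 5 * k 1 * k 3)"
    using C unfolding R4 R5 .
  hence "k 15 * k 13 * xOp * (k 2 * (k 4 + k 5)) < (k 14 + k 15) * k 5 * k 1 * k 3"
    using \<open>xD > 0\<close> by simp
  hence Bi: "xOp * (k 2 * (k 4 + k 5) * (k 13 * k 15)) < k 1 * k 3 * k 5 * (k 14 + k 15)"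
    by (simp only: mult_ac)
  have D: "k 2 * (k 4 + k 5) * (k 13 * k 15) > 0" using pos k13 k15 by simp
  have Eq: "(k 1 / k 2) * (k 3 * k 5 / (k 4 + k 5)) * ((k 14 + k 15) / (k 13 * k 15))
      = (k 1 * k 3 * k 5 * (k 14 + k 15)) / (k 2 * (k 4 + k 5) * (k 13 * k 15))"
    by (simp add: mult_ac)
  have B: "xOp < (k 1 / k 2) * (k 3 * k 5 / (k 4 + k 5)) * ((k 14 + k 15) / (k 13 * k 15))"
    unfolding Eq using Bi D by (simp add: pos_less_divide_eq)
  show ?thesis using A B by simp
qed

end
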